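(* Let $\mathcal{G}\subseteq C(\mathbb{R},\mathbb{R})$. The following conditions are equivalent: (1) $\mathcal{K}_\mathcal{G}=\{\mathrm{CL}(E):E\in\mathrm{CL}(\mathbb{R})\}$; (2) there exist $f,h\in C(\mathbb{R},\mathbb{R}^* )$ such that $f\le h$, $f^{-1}[\mathbb{R}]\cup h^{-1}[\mathbb{R}]=\mathbb{R}$, and $\mathcal{G}=[f,h]$.
   Context: $\mathbb{R}^*=\mathbb{R}\cup\{-\infty,\infty\}$ with its usual order topology; $C(\mathbb{R},\mathbb{R}^* )$ is the set of continuous functions $\mathbb{R}\to\mathbb{R}^*$; $f\le g$ means $f(x)\le g(x)$ for all $x$; $[f,h]=\{g\in C(\mathbb{R},\mathbb{R}):f\le g\le h\}$. For a closed set $E\subseteq\mathbb{R}$, $\mathrm{CL}(E)$ denotes the family of all closed subsets of $E$. For $\mathcal{G}\subseteq C(\mathbb{R},\mathbb{R})$ let $R_\mathcal{G}=\{(f,E)\in C(\mathbb{R},\mathbb{R})\times\mathrm{CL}(\mathbb{R}):(\exists g\in\mathcal{G})\, f\restriction E=g\restriction E\}$; for $\mathcal{F}\subseteq C(\mathbb{R},\mathbb{R})$ put $E_\mathcal{G}(\mathcal{F})=\{E\in\mathrm{CL}(\mathbb{R}):(\forall f\in\mathcal{F})\,(f,E)\in R_\mathcal{G}\}$, and let $\mathcal{K}_\mathcal{G}=\{E_\mathcal{G}(\mathcal{F}):\mathcal{F}\subseteq C(\mathbb{R},\mathbb{R})\}$. *)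

theory Defs
  imports "HOL-Analysis.Analysis"
begin

text \<open>C(R,R): continuous real functions. R* is modelled by ereal (order topology).\<close>
definition CRR :: "(real \<Rightarrow> real) set" where
  "CRR = {g. continuous_on UNIV g}"

definition CL :: "real set \<Rightarrow> real set set" where
  "CL E = {A. closed A \<and> A \<subseteq> E}"

definition interval_fun :: "(real \<Rightarrow> ereal) \<Rightarrow> (real \<Rightarrow> ereal) \<Rightarrow> (real \<Rightarrow> real) set" where
  "interval_fun f h = {g. continuous_on UNIV g \<and> (\<forall>x. f x \<le> ereal (g x) \<and> ereal (g x) \<le> h x)}"

definition R_rel :: "(real \<Rightarrow> real) set \<Rightarrow> ((real \<Rightarrow> real) \<times> real set) set" where
  "R_rel G = {(f, E). f \<in> CRR \<and> E \<in> CL UNIV \<and> (\<exists>g\<in>G. \<forall>x\<in>E. f x = g x)}"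

definition E_of :: "(real \<Rightarrow> real) set \<Rightarrow> (real \<Rightarrow> real) set \<Rightarrow> real set set" where
  "E_of G F = {E \<in> CL UNIV. \<forall>f\<in>F. (f, E) \<in> R_rel G}"

definition K_of :: "(real \<Rightarrow> real) set \<Rightarrow> real set set set" where
  "K_of G = {E_of G F | F. F \<subseteq> CRR}"

end

theory Submission
  imports Defs
begin

lemma R_rel_iff: "\<phi> \<in> CRR \<Longrightarrow> (\<phi>, E) \<in> R_rel G \<longleftrightarrow> closed E \<and> (\<exists>g\<in>G. \<forall>x\<in>E. \<phi> x = g x)"
  by (simp add: R_rel_def CL_def)

lemma E_of_iff: "F \<subseteq> CRR \<Longrightarrow> E \<in> E_of G F \<longleftrightarrow> closed E \<and> (\<forall>\<phi>\<in>F. \<exists>g\<in>G. \<forall>x\<in>E. \<phi> x = g x)"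
  unfolding E_of_def R_rel_def CL_def by (auto simp: subset_iff)

lemma cont_real_of_ereal:
  fixes F :: "real \<Rightarrow> ereal"
  assumes "continuous_on UNIV F" "\<And>y. \<bar>F y\<bar> \<noteq> \<infinity>"
  shows "continuous_on UNIV (\<lambda>y. real_of_ereal (F y))"
  using continuous_on_iff_real[of UNIV F] assms by (simp add: o_def)

lemma median_ok:
  fixes f h :: "real \<Rightarrow> ereal"
  assumes cf: "continuous_on UNIV f" and ch: "continuous_on UNIV h" and fh: "f \<le> h"
    and fin: "f -` (range ereal) \<union> h -` (range ereal) = UNIV"
    and cp: "continuous_on UNIV \<phi>"
  defines "m \<equiv> (\<lambda>y. real_of_ereal (max (f y) (min (h y) (ereal (\<phi> y)))))"
  shows "m \<in> interval_fun f h" and "\<And>y. f y \<le> ereal (\<phi> y) \<Longrightarrow> ereal (\<phi> y) \<le> h y \<Longrightarrow> m y = \<phi> y"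
proof -
  have fh': "f y \<le> h y" for y using fh by (simp add: le_fun_def)
  have fy: "f y \<noteq> \<infinity>" for y
  proof
    assume "f y = \<infinity>" then have "h y = \<infinity>" using fh'[of y] by simp
    moreover have "y \<in> f -` range ereal \<union> h -` range ereal" using fin by simp
    ultimately show False using \<open>f y = \<infinity>\<close> by auto
  qed
  have hy: "h y \<noteq> -\<infinity>" for y
  proof
    assume "h y = -\<infinity>" then have "f y = -\<infinity>" using fh'[of y] by simp
    moreover have "y \<in> f -` range ereal \<union> h -` range ereal" using fin by simp
    ultimately show False using \<open>h y = -\<infinity>\<close> by auto
  qed
  define M where "M = (\<lambda>y. max (f y) (min (h y) (ereal (\<phi> y))))"
  have Mfin: "\<bar>M y\<bar> \<noteq> \<infinity>" for y
    using fy[of y] hy[of y] unfolding M_def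
    by (cases "f y"; cases "h y") (auto simp: max_def min_def)
  have mM: "ereal (m y) = M y" for y
    using Mfin[of y] unfolding m_def M_def by (simp add: ereal_real')
  have cM: "continuous_on UNIV M" unfolding M_def
    by (intro continuous_on_max continuous_on_min cf ch continuous_on_ereal cp)
  have "continuous_on UNIV m" unfolding m_def
    using cont_real_of_ereal[OF cM Mfin] unfolding M_def .
  moreover have "f y \<le> ereal (m y) \<and> ereal (m y) \<le> h y" for y
    using fh'[of y] unfolding mM M_def by (auto simp: max_def min_def)
  ultimately show "m \<in> interval_fun f h" by (simp add: interval_fun_def)
  show "m y = \<phi> y" if "f y \<le> ereal (\<phi> y)" "ereal (\<phi> y) \<le> h y" for y
  proof -
    have "M y = ereal (\<phi> y)" using that unfolding M_def by (simp add: max_def min_def)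
    then show ?thesis using mM[of y] by simp
  qed
qed

lemma dir21:
  fixes f h :: "real \<Rightarrow> ereal"
  assumes cf: "continuous_on UNIV f" and ch: "continuous_on UNIV h" and fh: "f \<le> h"
    and fin: "f -` (range ereal) \<union> h -` (range ereal) = UNIV"
  shows "K_of (interval_fun f h) = {CL E | E. E \<in> CL UNIV}"
proof -
  let ?G = "interval_fun f h"
  define B where "B = (\<lambda>\<phi>::real\<Rightarrow>real. {y. f y \<le> ereal (\<phi> y) \<and> ereal (\<phi> y) \<le> h y})"
  have Bcl: "closed (B \<phi>)" if "\<phi> \<in> CRR" for \<phi>
    using that unfolding B_def CRR_def
    by (intro closed_Collect_conj closed_Collect_le cf ch continuous_on_ereal) auto
  have ext: "(\<exists>g\<in>?G. \<forall>x\<in>E. \<phi> x = g x) \<longleftrightarrow> E \<subseteq> B \<phi>" if "\<phi> \<in> CRR" for \<phi> E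
  proof
    assume "\<exists>g\<in>?G. \<forall>x\<in>E. \<phi> x = g x"
    then show "E \<subseteq> B \<phi>" unfolding B_def interval_fun_def by auto
  next
    assume EB: "E \<subseteq> B \<phi>"
    have cp: "continuous_on UNIV \<phi>" using that by (simp add: CRR_def)
    show "\<exists>g\<in>?G. \<forall>x\<in>E. \<phi> x = g x"
    proof (rule bexI[OF _ median_ok(1)[OF cf ch fh fin cp]])
      show "\<forall>x\<in>E. \<phi> x = real_of_ereal (max (f x) (min (h x) (ereal (\<phi> x))))"
        using median_ok(2)[OF cf ch fh fin cp] EB unfolding B_def by auto
    qed
  qed
  have EofF: "E_of ?G F = CL (\<Inter>\<phi>\<in>F. B \<phi>)" if "F \<subseteq> CRR" for F
  proof (rule set_eqI)
    fix E
    have "(\<forall>\<phi>\<in>F. \<exists>g\<in>?G. \<forall>x\<in>E. \<phi> x = g x) \<longleftrightarrow> (\<forall>\<phi>\<in>F. E \<subseteq> B \<phi>)" using ext that by blast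
    then show "E \<in> E_of ?G F \<longleftrightarrow> E \<in> CL (\<Inter>\<phi>\<in>F. B \<phi>)" by (auto simp: E_of_iff[OF that] CL_def)
  qed
  show ?thesis
  proof (rule set_eqI, rule iffI)
    fix X assume "X \<in> K_of ?G"
    then obtain F where F: "F \<subseteq> CRR" "X = E_of ?G F" by (auto simp: K_of_def)
    then have "X = CL (\<Inter>\<phi>\<in>F. B \<phi>)" using EofF by simp
    moreover have "(\<Inter>\<phi>\<in>F. B \<phi>) \<in> CL UNIV" using Bcl F(1) by (auto simp: CL_def intro!: closed_INT)
    ultimately show "X \<in> {CL E | E. E \<in> CL UNIV}" by blast
  next
    fix X assume "X \<in> {CL E | E. E \<in> CL UNIV}"
    then obtain E where E: "closed E" "X = CL E" by (auto simp: CL_def)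
    define g0 where "g0 = (\<lambda>y. real_of_ereal (max (f y) (min (h y) (ereal ((\<lambda>_. 0::real) y)))))"
    have g0G: "g0 \<in> ?G" unfolding g0_def by (rule median_ok(1)[OF cf ch fh fin continuous_on_const])
    define F where "F = {\<phi>. \<exists>x r t. x \<notin> E \<and> r > 0 \<and> (\<forall>y\<in>E. r \<le> \<bar>y - x\<bar>) \<and> \<not> (f x \<le> ereal t \<and> ereal t \<le> h x) \<and> \<phi> = (\<lambda>y. g0 y + (t - g0 x) * max 0 (1 - \<bar>y - x\<bar> / r))}"
    have g0c: "continuous_on UNIV g0" using g0G by (simp add: interval_fun_def)
    have FC: "F \<subseteq> CRR" unfolding F_def CRR_def by (auto intro!: continuous_intros g0c)
    have "(\<Inter>\<phi>\<in>F. B \<phi>) = E"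
    proof
      show "(\<Inter>\<phi>\<in>F. B \<phi>) \<subseteq> E"
      proof
        fix x assume xB: "x \<in> (\<Inter>\<phi>\<in>F. B \<phi>)"
        show "x \<in> E"
        proof (rule ccontr)
          assume xE: "x \<notin> E"
          then have "x \<in> -E" by simp
          moreover have "open (-E)" using E(1) by auto
          ultimately obtain r where r: "r > 0" "ball x r \<subseteq> -E" using open_contains_ball by blast
          then have rE: "\<forall>y\<in>E. r \<le> \<bar>y - x\<bar>" by (force simp: subset_iff dist_real_def abs_minus_commute)
          obtain t where t: "\<not> (f x \<le> ereal t \<and> ereal t \<le> h x)"
          proof (cases "h x = \<infinity>")
            case True
            have "x \<in> f -` range ereal \<union> h -` range ereal" using fin by simp
            with True obtain a where "f x = ereal a" by (cases "f x") auto
            then show ?thesis using that[of "a - 1"] by simp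
          next
            case False
            then show ?thesis using that by (cases "h x") (auto intro: that[of 0] that[of "real_of_ereal (h x) + 1"])
          qed
          define \<phi> where "\<phi> = (\<lambda>y. g0 y + (t - g0 x) * max 0 (1 - \<bar>y - x\<bar> / r))"
          have "\<phi> \<in> F" unfolding F_def \<phi>_def using xE r(1) rE t by blast
          moreover have "\<phi> x = t" unfolding \<phi>_def by simp
          ultimately show False using xB t unfolding B_def by auto
        qed
      qed
      show "E \<subseteq> (\<Inter>\<phi>\<in>F. B \<phi>)"
      proof
        fix y assume yE: "y \<in> E"
        show "y \<in> (\<Inter>\<phi>\<in>F. B \<phi>)"
        proof
          fix \<phi> assume "\<phi> \<in> F"
          then obtain x r t where xr: "r > 0" "\<forall>y\<in>E. r \<le> \<bar>y - x\<bar>" "\<phi> = (\<lambda>y. g0 y + (t - g0 x) * max 0 (1 - \<bar>y - x\<bar> / r))" unfolding F_def by blast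
          have "1 \<le> \<bar>y - x\<bar> / r" using xr(1,2) yE by (simp add: le_divide_eq)
          then have "\<phi> y = g0 y" using xr(3) by simp
          then show "y \<in> B \<phi>" using g0G unfolding B_def interval_fun_def by simp
        qed
      qed
    qed
    then have "X = E_of ?G F" using EofF[OF FC] E(2) by simp
    then show "X \<in> K_of ?G" using FC unfolding K_of_def by blast
  qed
qed

lemma ev_notin: "closed S \<Longrightarrow> x \<notin> S \<Longrightarrow> eventually (\<lambda>y. y \<notin> S) (at (x::real))"
  unfolding eventually_at_topological by (intro exI[of _ "-S"]) auto

lemma P1_from_K:
  assumes K: "K_of G = {CL E | E. E \<in> CL UNIV}" and p: "\<phi> \<in> CRR"
  shows "closed {y. \<exists>g\<in>G. g y = \<phi> y}" and "\<exists>g\<in>G. \<forall>y. (\<exists>g'\<in>G. g' y = \<phi> y) \<longrightarrow> g y = \<phi> y"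
proof -
  have "E_of G {\<phi>} \<in> K_of G" using p unfolding K_of_def by blast
  with K obtain E where E: "closed E" "E_of G {\<phi>} = CL E" by (auto simp: CL_def)
  have mem: "A \<in> E_of G {\<phi>} \<longleftrightarrow> closed A \<and> (\<exists>g\<in>G. \<forall>x\<in>A. \<phi> x = g x)" for A
    using E_of_iff[of "{\<phi>}" A G] p by simp
  have AE: "{y. \<exists>g\<in>G. g y = \<phi> y} = E"
  proof (rule set_eqI)
    fix y
    have "y \<in> E \<longleftrightarrow> {y} \<in> CL E" by (simp add: CL_def)
    also have "\<dots> \<longleftrightarrow> {y} \<in> E_of G {\<phi>}" using E(2) by simp
    also have "\<dots> \<longleftrightarrow> (\<exists>g\<in>G. \<forall>x\<in>{y}. \<phi> x = g x)" using mem[of "{y}"] by auto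
    also have "\<dots> \<longleftrightarrow> (\<exists>g\<in>G. g y = \<phi> y)" by (metis singletonD singletonI)
    finally show "y \<in> {y. \<exists>g\<in>G. g y = \<phi> y} \<longleftrightarrow> y \<in> E" by simp
  qed
  show "closed {y. \<exists>g\<in>G. g y = \<phi> y}" using AE E(1) by simp
  have "E \<in> E_of G {\<phi>}" using E by (simp add: CL_def)
  then obtain g where "g \<in> G" "\<forall>x\<in>E. \<phi> x = g x" using mem by blast
  then show "\<exists>g\<in>G. \<forall>y. (\<exists>g'\<in>G. g' y = \<phi> y) \<longrightarrow> g y = \<phi> y" using AE by (metis (mono_tags, lifting) mem_Collect_eq)
qed

lemma P2_from_K:
  assumes K: "K_of G = {CL E | E. E \<in> CL UNIV}"
  shows "\<exists>t. \<forall>g\<in>G. g x \<noteq> t"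
proof (rule ccontr)
  assume "\<not> ?thesis" then have all: "\<forall>t. \<exists>g\<in>G. g x = t" by blast
  have "CL {} \<in> K_of G" using K by (auto simp: CL_def)
  then obtain F where F: "F \<subseteq> CRR" "CL {} = E_of G F" by (auto simp: K_of_def)
  have "\<forall>\<phi>\<in>F. \<exists>g\<in>G. \<forall>z\<in>{x}. \<phi> z = g z" using all by (metis singletonD)
  then have "{x} \<in> E_of G F" by (auto simp: E_of_iff[OF F(1)])
  then have "{x} \<in> CL {}" using F(2) by simp
  then show False by (simp add: CL_def)
qed

lemma convex_V:
  assumes GC: "G \<subseteq> CRR"
    and P1c: "\<And>\<phi>. \<phi> \<in> CRR \<Longrightarrow> closed {y. \<exists>g\<in>G. g y = \<phi> y}"
    and P1e: "\<And>\<phi>. \<phi> \<in> CRR \<Longrightarrow> \<exists>g\<in>G. \<forall>y. (\<exists>g'\<in>G. g' y = \<phi> y) \<longrightarrow> g y = \<phi> y"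
    and g1: "g1 \<in> G" "g2 \<in> G" "g1 x < c" "c < g2 x"
  shows "\<exists>g\<in>G. g x = c"
proof (rule ccontr)
  assume nc: "\<not> (\<exists>g\<in>G. g x = c)"
  have "closed {y. \<exists>g\<in>G. g y = c}" using P1c[of "\<lambda>_. c"] by (simp add: CRR_def)
  then have op: "open (-{y. \<exists>g\<in>G. g y = c})" by auto
  have "x \<in> -{y. \<exists>g\<in>G. g y = c}" using nc by simp
  then obtain \<delta> where \<delta>: "\<delta> > 0" "ball x \<delta> \<subseteq> -{y. \<exists>g\<in>G. g y = c}" using open_contains_ball op by blast
  have "continuous_on UNIV g2" using GC g1(2) by (auto simp: CRR_def)
  then obtain d where d: "d > 0" "\<forall>y. dist y x < d \<longrightarrow> dist (g2 y) (g2 x) < g2 x - c"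
    using g1(4) unfolding continuous_on_iff by (metis UNIV_I diff_gt_0_iff_gt)
  define q where "q = x + min \<delta> d / 2"
  have qx: "x < q" "dist q x < \<delta>" "dist q x < d" using \<delta>(1) d(1) by (auto simp: q_def dist_real_def)
  have "\<bar>g2 q - g2 x\<bar> < g2 x - c" using d(2) qx(3) by (simp add: dist_real_def)
  then have g2q: "g2 q > c" by (simp add: abs_less_iff)
  define \<phi> where "\<phi> = (\<lambda>y. g1 x + (g2 q - g1 x) * (y - x) / (q - x))"
  have "\<phi> \<in> CRR" unfolding \<phi>_def CRR_def using qx(1) by (auto intro!: continuous_intros)
  then obtain g where g: "g \<in> G" "\<forall>y. (\<exists>g'\<in>G. g' y = \<phi> y) \<longrightarrow> g y = \<phi> y" using P1e by blast
  have "\<phi> x = g1 x" by (simp add: \<phi>_def)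
  then have gx: "g x = g1 x" using g(2) g1(1) by metis
  have "\<phi> q = g2 q" using qx(1) by (simp add: \<phi>_def)
  then have gq: "g q = g2 q" using g(2) g1(2) by metis
  have "continuous_on {x..q} g" using GC g(1) by (auto simp: CRR_def intro: continuous_on_subset)
  then obtain z where z: "x \<le> z" "z \<le> q" "g z = c" using IVT'[of g x c q] gx gq g1(3) g2q qx(1) by auto
  have "z \<in> ball x \<delta>" using z qx by (auto simp: dist_real_def)
  then show False using \<delta>(2) z(3) g(1) by auto
qed

lemma sup_side:
  assumes GC: "G \<subseteq> CRR"
    and P1c: "\<And>\<phi>. \<phi> \<in> CRR \<Longrightarrow> closed {y. \<exists>g\<in>G. g y = \<phi> y}"
    and P1e: "\<And>\<phi>. \<phi> \<in> CRR \<Longrightarrow> \<exists>g\<in>G. \<forall>y. (\<exists>g'\<in>G. g' y = \<phi> y) \<longrightarrow> g y = \<phi> y"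
    and Gne: "G \<noteq> {}"
  defines "h \<equiv> (\<lambda>x. SUP g\<in>G. ereal (g x))"
  shows "continuous_on UNIV h" and "\<And>x c. h x = ereal c \<Longrightarrow> \<exists>g\<in>G. g x = c"
proof -
  have gcont: "((\<lambda>y. ereal (g y)) \<longlongrightarrow> ereal (g x)) (at x)" if "g \<in> G" for g x
  proof -
    have "continuous_on UNIV g" using GC that by (auto simp: CRR_def)
    then have "isCont g x" by (simp add: continuous_on_eq_continuous_at)
    then show ?thesis by (simp add: isCont_def)
  qed
  have hge: "ereal (g x) \<le> h x" if "g \<in> G" for g x using that unfolding h_def by (rule SUP_upper)
  have hlt: "\<exists>g\<in>G. l < ereal (g x)" if "l < h x" for l x using that by (simp add: h_def less_SUP_iff)
  show cont: "continuous_on UNIV h"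
    unfolding continuous_on_def
  proof (intro ballI)
    fix x :: real
    show "(h \<longlongrightarrow> h x) (at x within UNIV)"
      unfolding order_tendsto_iff
    proof (intro conjI allI impI)
      fix l assume "l < h x"
      then obtain g where g: "g \<in> G" "l < ereal (g x)" using hlt by blast
      have "eventually (\<lambda>y. l < ereal (g y)) (at x)" using order_tendstoD(1)[OF gcont[OF g(1)] g(2)] .
      then show "eventually (\<lambda>y. l < h y) (at x within UNIV)"
        by eventually_elim (use hge g(1) in \<open>meson less_le_trans\<close>)
    next
      fix u assume "h x < u"
      then obtain c where c: "h x < ereal c" "ereal c < u" using ereal_dense2 by blast
      obtain g0 where g0: "g0 \<in> G" using Gne by blast
      have "ereal (g0 x) < ereal c" using hge[OF g0, of x] c(1) by (rule le_less_trans)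
      then have ev1: "eventually (\<lambda>y. ereal (g0 y) < ereal c) (at x)"
        using order_tendstoD(2)[OF gcont[OF g0]] by blast
      let ?S = "{y. \<exists>g\<in>G. g y = c}"
      have "closed ?S" using P1c[of "\<lambda>_. c"] by (simp add: CRR_def)
      moreover have "x \<notin> ?S"
      proof
        assume "x \<in> ?S"
        then obtain g where "g \<in> G" "g x = c" by auto
        then have "ereal c \<le> h x" using hge by metis
        then show False using c(1) by simp
      qed
      ultimately have ev2: "eventually (\<lambda>y. y \<notin> ?S) (at x)" by (rule ev_notin)
      have "eventually (\<lambda>y. h y < u) (at x)"
        using ev1 ev2
      proof eventually_elim
        case (elim y)
        have "h y \<le> ereal c"
        proof (rule ccontr)
          assume "\<not> h y \<le> ereal c"
          then have "ereal c < h y" by simp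
          then obtain g where g: "g \<in> G" "c < g y" using hlt by fastforce
          have "g0 y < c" using elim(1) by simp
          then have "\<exists>g\<in>G. g y = c" using convex_V[OF GC P1c P1e g0 g(1), of y c] g(2) by blast
          then show False using elim(2) by simp
        qed
        then show ?case using c(2) by simp
      qed
      then show "eventually (\<lambda>y. h y < u) (at x within UNIV)" by simp
    qed
  qed
  show "\<exists>g\<in>G. g x = c" if hc: "h x = ereal c" for x c
  proof (cases "\<exists>g\<in>G. g x = c")
    case True then show ?thesis .
  next
    case False
    obtain g0 where g0: "g0 \<in> G" using Gne by blast
    have "g0 x \<le> c" using hge[OF g0, of x] hc by simp
    then have g0c: "g0 x < c" using False g0 by force
    have hninf: "h y \<noteq> -\<infinity>" for y using hge[OF g0, of y] by auto
    define \<psi> where "\<psi> = (\<lambda>y. real_of_ereal (min (h y) (ereal (c+1))))"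
    have \<psi>fin: "\<bar>min (h y) (ereal (c+1))\<bar> \<noteq> \<infinity>" for y using hninf[of y] by (cases "h y") (auto simp: min_def)
    have \<psi>e: "ereal (\<psi> y) = min (h y) (ereal (c+1))" for y using \<psi>fin[of y] by (simp add: \<psi>_def ereal_real')
    have \<psi>c: "continuous_on UNIV \<psi>" unfolding \<psi>_def
      by (rule cont_real_of_ereal[OF _ \<psi>fin]) (intro continuous_on_min cont continuous_on_const)
    define \<phi> where "\<phi> = (\<lambda>y. min c (\<psi> y - \<bar>y - x\<bar>))"
    have \<phi>c: "continuous_on UNIV \<phi>" unfolding \<phi>_def by (intro continuous_intros \<psi>c)
    have "ereal (\<psi> x) = ereal c" using \<psi>e[of x] hc by simp
    then have \<phi>x: "\<phi> x = c" by (simp add: \<phi>_def)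
    have \<phi>lt: "ereal (\<phi> y) < h y" if "y \<noteq> x" for y
    proof -
      have "\<phi> y < \<psi> y" using that by (simp add: \<phi>_def)
      then have "ereal (\<phi> y) < ereal (\<psi> y)" by simp
      also have "\<dots> \<le> h y" using \<psi>e[of y] by simp
      finally show ?thesis .
    qed
    have g0c': "continuous_on UNIV g0" using GC g0 by (auto simp: CRR_def)
    have "continuous_on UNIV (\<lambda>y. \<phi> y - g0 y)" by (intro continuous_intros \<phi>c g0c')
    then have "isCont (\<lambda>y. \<phi> y - g0 y) x" by (simp add: continuous_on_eq_continuous_at)
    then have "((\<lambda>y. \<phi> y - g0 y) \<longlongrightarrow> \<phi> x - g0 x) (at x)" by (simp add: isCont_def)
    moreover have "0 < \<phi> x - g0 x" using \<phi>x g0c by simp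
    ultimately have ev1: "eventually (\<lambda>y. 0 < \<phi> y - g0 y) (at x)" by (rule order_tendstoD(1))
    let ?A = "{y. \<exists>g\<in>G. g y = \<phi> y}"
    have evA: "eventually (\<lambda>y. y \<in> ?A) (at x)"
      using ev1 eventually_neq_at_within[of x x UNIV]
    proof eventually_elim
      case (elim y)
      obtain g where g: "g \<in> G" "ereal (\<phi> y) < ereal (g y)" using hlt[OF \<phi>lt[OF elim(2)]] by blast
      have "g0 y < \<phi> y" "\<phi> y < g y" using elim(1) g(2) by simp_all
      then show ?case using convex_V[OF GC P1c P1e g0 g(1), of y "\<phi> y"] by simp
    qed
    have clA: "closed ?A" using P1c \<phi>c by (simp add: CRR_def)
    have "x \<in> ?A"
    proof (rule ccontr)
      assume "x \<notin> ?A"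
      then have "eventually (\<lambda>y. y \<notin> ?A) (at x)" by (rule ev_notin[OF clA])
      with evA have "eventually (\<lambda>y. False) (at x)" by eventually_elim simp
      then show False by simp
    qed
    then show ?thesis using \<phi>x by simp
  qed
qed

lemma inf_side:
  assumes GC: "G \<subseteq> CRR"
    and P1c: "\<And>\<phi>. \<phi> \<in> CRR \<Longrightarrow> closed {y. \<exists>g\<in>G. g y = \<phi> y}"
    and P1e: "\<And>\<phi>. \<phi> \<in> CRR \<Longrightarrow> \<exists>g\<in>G. \<forall>y. (\<exists>g'\<in>G. g' y = \<phi> y) \<longrightarrow> g y = \<phi> y"
    and Gne: "G \<noteq> {}"
  defines "f \<equiv> (\<lambda>x. INF g\<in>G. ereal (g x))"
  shows "continuous_on UNIV f" and "\<And>x c. f x = ereal c \<Longrightarrow> \<exists>g\<in>G. g x = c"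
proof -
  have gcont: "((\<lambda>y. ereal (g y)) \<longlongrightarrow> ereal (g x)) (at x)" if "g \<in> G" for g x
  proof -
    have "continuous_on UNIV g" using GC that by (auto simp: CRR_def)
    then have "isCont g x" by (simp add: continuous_on_eq_continuous_at)
    then show ?thesis by (simp add: isCont_def)
  qed
  have fle: "f x \<le> ereal (g x)" if "g \<in> G" for g x using that unfolding f_def by (rule INF_lower)
  have flt: "\<exists>g\<in>G. ereal (g x) < u" if "f x < u" for u x using that by (simp add: f_def INF_less_iff)
  show cont: "continuous_on UNIV f"
    unfolding continuous_on_def
  proof (intro ballI)
    fix x :: real
    show "(f \<longlongrightarrow> f x) (at x within UNIV)"
      unfolding order_tendsto_iff
    proof (intro conjI allI impI)
      fix u assume "f x < u"
      then obtain g where g: "g \<in> G" "ereal (g x) < u" using flt by blast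
      have "eventually (\<lambda>y. ereal (g y) < u) (at x)" using order_tendstoD(2)[OF gcont[OF g(1)] g(2)] .
      then show "eventually (\<lambda>y. f y < u) (at x within UNIV)"
        by eventually_elim (use fle g(1) in \<open>meson le_less_trans\<close>)
    next
      fix l assume "l < f x"
      then obtain c where c: "l < ereal c" "ereal c < f x" using ereal_dense2 by blast
      obtain g0 where g0: "g0 \<in> G" using Gne by blast
      have "ereal c < ereal (g0 x)" using c(2) fle[OF g0, of x] by (rule less_le_trans)
      then have ev1: "eventually (\<lambda>y. ereal c < ereal (g0 y)) (at x)"
        using order_tendstoD(1)[OF gcont[OF g0]] by blast
      let ?S = "{y. \<exists>g\<in>G. g y = c}"
      have "closed ?S" using P1c[of "\<lambda>_. c"] by (simp add: CRR_def)
      moreover have "x \<notin> ?S"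
      proof
        assume "x \<in> ?S"
        then obtain g where "g \<in> G" "g x = c" by auto
        then have "f x \<le> ereal c" using fle by metis
        then show False using c(2) by simp
      qed
      ultimately have ev2: "eventually (\<lambda>y. y \<notin> ?S) (at x)" by (rule ev_notin)
      have "eventually (\<lambda>y. l < f y) (at x)"
        using ev1 ev2
      proof eventually_elim
        case (elim y)
        have "ereal c \<le> f y"
        proof (rule ccontr)
          assume "\<not> ereal c \<le> f y"
          then have "f y < ereal c" by simp
          then obtain g where g: "g \<in> G" "g y < c" using flt by fastforce
          have "c < g0 y" using elim(1) by simp
          then have "\<exists>g\<in>G. g y = c" using convex_V[OF GC P1c P1e g(1) g0, of y c] g(2) by blast
          then show False using elim(2) by simp
        qed
        with c(1) show ?case by (rule less_le_trans)
      qed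
      then show "eventually (\<lambda>y. l < f y) (at x within UNIV)" by simp
    qed
  qed
  show "\<exists>g\<in>G. g x = c" if hc: "f x = ereal c" for x c
  proof (cases "\<exists>g\<in>G. g x = c")
    case True then show ?thesis .
  next
    case False
    obtain g0 where g0: "g0 \<in> G" using Gne by blast
    have "c \<le> g0 x" using fle[OF g0, of x] hc by simp
    then have g0c: "c < g0 x" using False g0 by force
    have fninf: "f y \<noteq> \<infinity>" for y using fle[OF g0, of y] by auto
    define \<psi> where "\<psi> = (\<lambda>y. real_of_ereal (max (f y) (ereal (c-1))))"
    have \<psi>fin: "\<bar>max (f y) (ereal (c-1))\<bar> \<noteq> \<infinity>" for y using fninf[of y] by (cases "f y") (auto simp: max_def)
    have \<psi>e: "ereal (\<psi> y) = max (f y) (ereal (c-1))" for y using \<psi>fin[of y] by (simp add: \<psi>_def ereal_real')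
    have \<psi>c: "continuous_on UNIV \<psi>" unfolding \<psi>_def
      by (rule cont_real_of_ereal[OF _ \<psi>fin]) (intro continuous_on_max cont continuous_on_const)
    define \<phi> where "\<phi> = (\<lambda>y. max c (\<psi> y + \<bar>y - x\<bar>))"
    have \<phi>c: "continuous_on UNIV \<phi>" unfolding \<phi>_def by (intro continuous_intros \<psi>c)
    have "ereal (\<psi> x) = ereal c" using \<psi>e[of x] hc by simp
    then have \<phi>x: "\<phi> x = c" by (simp add: \<phi>_def)
    have \<phi>lt: "f y < ereal (\<phi> y)" if "y \<noteq> x" for y
    proof -
      have "f y \<le> ereal (\<psi> y)" using \<psi>e[of y] by simp
      also have "\<psi> y < \<phi> y" using that by (simp add: \<phi>_def)
      then have "ereal (\<psi> y) < ereal (\<phi> y)" by simp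
      finally show ?thesis .
    qed
    have g0c': "continuous_on UNIV g0" using GC g0 by (auto simp: CRR_def)
    have "continuous_on UNIV (\<lambda>y. g0 y - \<phi> y)" by (intro continuous_intros \<phi>c g0c')
    then have "isCont (\<lambda>y. g0 y - \<phi> y) x" by (simp add: continuous_on_eq_continuous_at)
    then have "((\<lambda>y. g0 y - \<phi> y) \<longlongrightarrow> g0 x - \<phi> x) (at x)" by (simp add: isCont_def)
    moreover have "0 < g0 x - \<phi> x" using \<phi>x g0c by simp
    ultimately have ev1: "eventually (\<lambda>y. 0 < g0 y - \<phi> y) (at x)" by (rule order_tendstoD(1))
    let ?A = "{y. \<exists>g\<in>G. g y = \<phi> y}"
    have evA: "eventually (\<lambda>y. y \<in> ?A) (at x)"
      using ev1 eventually_neq_at_within[of x x UNIV]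
    proof eventually_elim
      case (elim y)
      obtain g where g: "g \<in> G" "ereal (g y) < ereal (\<phi> y)" using flt[OF \<phi>lt[OF elim(2)]] by blast
      have "\<phi> y < g0 y" "g y < \<phi> y" using elim(1) g(2) by simp_all
      then show ?case using convex_V[OF GC P1c P1e g(1) g0, of y "\<phi> y"] by simp
    qed
    have clA: "closed ?A" using P1c \<phi>c by (simp add: CRR_def)
    have "x \<in> ?A"
    proof (rule ccontr)
      assume "x \<notin> ?A"
      then have "eventually (\<lambda>y. y \<notin> ?A) (at x)" by (rule ev_notin[OF clA])
      with evA have "eventually (\<lambda>y. False) (at x)" by eventually_elim simp
      then show False by simp
    qed
    then show ?thesis using \<phi>x by simp
  qed
qed

theorem corollary3p4:
  fixes G :: "(real \<Rightarrow> real) set"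
  assumes "G \<subseteq> CRR"
  shows "K_of G = {CL E | E. E \<in> CL UNIV} \<longleftrightarrow>
    (\<exists>f h :: real \<Rightarrow> ereal. continuous_on UNIV f \<and> continuous_on UNIV h \<and> f \<le> h \<and>
       f -` (range ereal) \<union> h -` (range ereal) = UNIV \<and> G = interval_fun f h)"
proof
  assume K: "K_of G = {CL E | E. E \<in> CL UNIV}"
  note GC = assms
  have P1c: "closed {y. \<exists>g\<in>G. g y = \<phi> y}" if "\<phi> \<in> CRR" for \<phi> using P1_from_K(1)[OF K that] .
  have P1e: "\<exists>g\<in>G. \<forall>y. (\<exists>g'\<in>G. g' y = \<phi> y) \<longrightarrow> g y = \<phi> y" if "\<phi> \<in> CRR" for \<phi>
    using P1_from_K(2)[OF K that] .
  have "(\<lambda>_. 0::real) \<in> CRR" by (simp add: CRR_def)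
  then have Gne: "G \<noteq> {}" using P1e by blast
  define f where "f = (\<lambda>x. INF g\<in>G. ereal (g x))"
  define h where "h = (\<lambda>x. SUP g\<in>G. ereal (g x))"
  have cf: "continuous_on UNIV f" and fcl: "\<And>x c. f x = ereal c \<Longrightarrow> \<exists>g\<in>G. g x = c"
    using inf_side[OF GC P1c P1e Gne] unfolding f_def by blast+
  have ch: "continuous_on UNIV h" and hcl: "\<And>x c. h x = ereal c \<Longrightarrow> \<exists>g\<in>G. g x = c"
    using sup_side[OF GC P1c P1e Gne] unfolding h_def by blast+
  have fle: "f x \<le> ereal (g x)" if "g \<in> G" for g x using that unfolding f_def by (rule INF_lower)
  have hge: "ereal (g x) \<le> h x" if "g \<in> G" for g x using that unfolding h_def by (rule SUP_upper)
  have flt: "\<exists>g\<in>G. ereal (g x) < u" if "f x < u" for u x using that by (simp add: f_def INF_less_iff)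
  have hlt: "\<exists>g\<in>G. l < ereal (g x)" if "l < h x" for l x using that by (simp add: h_def less_SUP_iff)
  obtain g0 where g0: "g0 \<in> G" using Gne by blast
  have fh: "f \<le> h"
  proof (rule le_funI)
    fix x show "f x \<le> h x" using fle[OF g0, of x] hge[OF g0, of x] by (rule order_trans)
  qed
  have inV: "\<exists>g\<in>G. g x = t" if tt: "f x < ereal t" "ereal t < h x" for x t
  proof -
    obtain g1 where g1: "g1 \<in> G" "ereal (g1 x) < ereal t" using flt[OF tt(1)] by blast
    obtain g2 where g2: "g2 \<in> G" "ereal t < ereal (g2 x)" using hlt[OF tt(2)] by blast
    show ?thesis using convex_V[OF GC P1c P1e g1(1) g2(1), of x t] g1(2) g2(2) by simp
  qed
  have finx: "f x \<in> range ereal \<or> h x \<in> range ereal" for x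
  proof (rule ccontr)
    assume nf: "\<not> (f x \<in> range ereal \<or> h x \<in> range ereal)"
    obtain t where t: "\<forall>g\<in>G. g x \<noteq> t" using P2_from_K[OF K] by blast
    have "f x \<noteq> \<infinity>" using fle[OF g0, of x] by auto
    then have fm: "f x = -\<infinity>" using nf by (cases "f x") auto
    have "h x \<noteq> -\<infinity>" using hge[OF g0, of x] by auto
    then have hp: "h x = \<infinity>" using nf by (cases "h x") auto
    have "\<exists>g\<in>G. g x = t" using inV[of x t] fm hp by simp
    then show False using t by blast
  qed
  have fin: "f -` (range ereal) \<union> h -` (range ereal) = UNIV" using finx by blast
  have "G = interval_fun f h"
  proof (rule set_eqI, rule iffI)
    fix g assume "g \<in> G"
    then show "g \<in> interval_fun f h" using GC fle hge by (auto simp: interval_fun_def CRR_def)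
  next
    fix \<phi> assume p: "\<phi> \<in> interval_fun f h"
    then have pc: "\<phi> \<in> CRR" by (simp add: interval_fun_def CRR_def)
    have all: "\<exists>g\<in>G. g x = \<phi> x" for x
    proof -
      have b: "f x \<le> ereal (\<phi> x)" "ereal (\<phi> x) \<le> h x" using p by (auto simp: interval_fun_def)
      show ?thesis
      proof (cases "f x = ereal (\<phi> x)")
        case True then show ?thesis using fcl by blast
      next
        case False
        show ?thesis
        proof (cases "h x = ereal (\<phi> x)")
          case True then show ?thesis using hcl by blast
        next
          case False2: False
          show ?thesis using inV[of x "\<phi> x"] b False False2 by (simp add: order.order_iff_strict)
        qed
      qed
    qed
    obtain g where g: "g \<in> G" "\<forall>y. (\<exists>g'\<in>G. g' y = \<phi> y) \<longrightarrow> g y = \<phi> y" using P1e[OF pc] by blast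
    have "g = \<phi>" using g(2) all by (intro ext) blast
    then show "\<phi> \<in> G" using g(1) by simp
  qed
  then show "\<exists>f h :: real \<Rightarrow> ereal. continuous_on UNIV f \<and> continuous_on UNIV h \<and> f \<le> h \<and>
       f -` (range ereal) \<union> h -` (range ereal) = UNIV \<and> G = interval_fun f h"
    using cf ch fh fin by blast
next
  assume "\<exists>f h :: real \<Rightarrow> ereal. continuous_on UNIV f \<and> continuous_on UNIV h \<and> f \<le> h \<and>
       f -` (range ereal) \<union> h -` (range ereal) = UNIV \<and> G = interval_fun f h"
  then obtain f h :: "real \<Rightarrow> ereal" where fh: "continuous_on UNIV f" "continuous_on UNIV h" "f \<le> h"
       "f -` (range ereal) \<union> h -` (range ereal) = UNIV" "G = interval_fun f h" by blast
  show "K_of G = {CL E | E. E \<in> CL UNIV}" using dir21[OF fh(1-4)] fh(5) by simp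
qed

end
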